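(* Let $X$ be a non-empty set. The monoid $T_X$ is right protomodal, and for every maximal left pre-reduced subset $E\subseteq E(T_X)$, $T_X$ is an inductive right $E$-monoid and $(P^{lt}_X,\cdot,R)\cong RRest(E,T_X)$ as unary semigroups.
   Context: A partition on $X$ is a set partition of $X\cup X'$, where $X'=\{x'\mid x\in X\}$ is a disjoint copy of $X$. The product $\alpha\beta$ of partitions: take a further disjoint copy $X''$; let $\alpha^\downarrow$ be the partition of $X\cup X''$ obtained from $\alpha$ by renaming each $x'$ as $x''$, and $\beta^\uparrow$ the partition of $X''\cup X'$ obtained from $\beta$ by renaming each $x$ as $x''$; form the graph on $X\cup X''\cup X'$ joining two vertices when they lie in a common block of $\alpha^\downarrow$ or of $\beta^\uparrow$; the blocks of $\alpha\beta$ are the non-empty intersections of its connected components with $X\cup X'$. This makes the set $P_X$ of partitions a monoid. $P^{lt}_X$ is the submonoid of left total partitions: those in which every $x\in X$ lies in a block containing some element of $X'$. For $\rho\in P^{lt}_X$ let $R(\rho)$ be the partition whose blocks are the sets $A\cup\{a'\mid a\in A\}$, where $A$ ranges over the classes of the equivalence relation on $X$ given by $x\sim y$ iff $x',y'$ lie in the same block of $\rho$; then $(P^{lt}_X,\cdot,R)$ is a right restriction monoid, i.e. it satisfies $xR(x)=x$, $R(x)R(y)=R(y)R(x)$, $R(xR(y))=R(x)R(y)$, $R(x)y=yR(xy)$. $T_X$ (maps $X\to X$, composed left to right: $st$ means $s$ first, then $t$) is identified with a submonoid of $P^{lt}_X$ via $t\mapsto$ the partition with blocks $t^{-1}(y)\cup\{y'\}$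 for $y\in\mathrm{ran}(t)$ and $\{y'\}$ for $y\notin\mathrm{ran}(t)$. For a semigroup $S$, $E(S)$ is its set of idempotents and $fS=\{fu\mid u\in S\}$; for $e,f\in E(S)$, $e\le_l f$ iff $e=fe$, and $e\sim_l f$ iff $e\le_l f$ and $f\le_l e$. $E\subseteq E(S)$ is left pre-reduced if $e=fe$ and $f=ef$ imply $e=f$ for $e,f\in E$, and maximal left pre-reduced if it contains exactly one element of each $\sim_l$-class of $E(S)$. A monoid $S$ is right protomodal if for every $e\in E(S)$ and $s\in S$, the set $\{u\in S\mid su=esu\}$ is non-empty and equals $fS$ for some $f\in E(S)$. Let $S$ be a monoid and $1\in E\subseteq E(S)$. $S$ is an inductive right $E$-monoid if $E$ is left pre-reduced, $(E,\le_l)$ is a meet-semilattice with meet $\wedge$, and (J1) for all $t\in S$, $e\in E$ there is $e\cdot t\in E$ such that for all $s\in S$: $ets=ts$ iff $(e\cdot t)s=s$; (J2) for $s\in S$, $e,f\in E$: $es=fs=s$ implies $(e\wedge f)s=s$. Then $RRest(E,S)$ is the set $\{(s,e)\in S\times E\mid se=s\}$ with multiplication $(s,e)(t,f)=(stg,g)$ where $g=(e\cdot t)\wedge f$, and unary operation $R((s,e))=(e,e)$. *)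

theory Defs
  imports "HOL-Algebra.Group" "HOL-Library.Disjoint_Sets"
begin

definition idems :: "('m, 'b) monoid_scheme \<Rightarrow> 'm set" where
  "idems S = {e \<in> carrier S. e \<otimes>\<^bsub>S\<^esub> e = e}"

definition le_l :: "('m, 'b) monoid_scheme \<Rightarrow> 'm \<Rightarrow> 'm \<Rightarrow> bool" where
  "le_l S e f \<longleftrightarrow> e = f \<otimes>\<^bsub>S\<^esub> e"

definition sim_l :: "('m, 'b) monoid_scheme \<Rightarrow> 'm \<Rightarrow> 'm \<Rightarrow> bool" where
  "sim_l S e f \<longleftrightarrow> le_l S e f \<and> le_l S f e"

definition left_pre_reduced :: "('m, 'b) monoid_scheme \<Rightarrow> 'm set \<Rightarrow> bool" where
  "left_pre_reduced S E \<longleftrightarrow> E \<subseteq> idems S \<and>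
     (\<forall>e\<in>E. \<forall>f\<in>E. e = f \<otimes>\<^bsub>S\<^esub> e \<and> f = e \<otimes>\<^bsub>S\<^esub> f \<longrightarrow> e = f)"

definition max_left_pre_reduced :: "('m, 'b) monoid_scheme \<Rightarrow> 'm set \<Rightarrow> bool" where
  "max_left_pre_reduced S E \<longleftrightarrow> E \<subseteq> idems S \<and>
     (\<forall>e\<in>idems S. \<exists>!f. f \<in> E \<and> sim_l S e f)"

definition right_protomodal :: "('m, 'b) monoid_scheme \<Rightarrow> bool" where
  "right_protomodal S \<longleftrightarrow> monoid S \<and>
     (\<forall>e\<in>idems S. \<forall>s\<in>carrier S.
        {u \<in> carrier S. s \<otimes>\<^bsub>S\<^esub> u = e \<otimes>\<^bsub>S\<^esub> s \<otimes>\<^bsub>S\<^esub> u} \<noteq> {} \<and>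
        (\<exists>f\<in>idems S. {u \<in> carrier S. s \<otimes>\<^bsub>S\<^esub> u = e \<otimes>\<^bsub>S\<^esub> s \<otimes>\<^bsub>S\<^esub> u}
                        = {f \<otimes>\<^bsub>S\<^esub> u | u. u \<in> carrier S}))"

definition is_meet :: "('m, 'b) monoid_scheme \<Rightarrow> 'm set \<Rightarrow> 'm \<Rightarrow> 'm \<Rightarrow> 'm \<Rightarrow> bool" where
  "is_meet S E e f m \<longleftrightarrow> m \<in> E \<and> le_l S m e \<and> le_l S m f \<and>
     (\<forall>k\<in>E. le_l S k e \<and> le_l S k f \<longrightarrow> le_l S k m)"

definition meet :: "('m, 'b) monoid_scheme \<Rightarrow> 'm set \<Rightarrow> 'm \<Rightarrow> 'm \<Rightarrow> 'm" where
  "meet S E e f = (THE m. is_meet S E e f m)"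

text \<open>the element e\<cdot>t of (J1); unique when E is left pre-reduced\<close>
definition dot :: "('m, 'b) monoid_scheme \<Rightarrow> 'm set \<Rightarrow> 'm \<Rightarrow> 'm \<Rightarrow> 'm" where
  "dot S E e t = (THE g. g \<in> E \<and> (\<forall>s\<in>carrier S.
       (e \<otimes>\<^bsub>S\<^esub> t \<otimes>\<^bsub>S\<^esub> s = t \<otimes>\<^bsub>S\<^esub> s \<longleftrightarrow> g \<otimes>\<^bsub>S\<^esub> s = s)))"

definition inductive_right_E_monoid :: "('m, 'b) monoid_scheme \<Rightarrow> 'm set \<Rightarrow> bool" where
  "inductive_right_E_monoid S E \<longleftrightarrow> monoid S \<and> \<one>\<^bsub>S\<^esub> \<in> E \<and> E \<subseteq> idems S \<and>
     left_pre_reduced S E \<and>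
     (\<forall>e\<in>E. \<forall>f\<in>E. \<exists>m. is_meet S E e f m) \<and>
     (\<forall>t\<in>carrier S. \<forall>e\<in>E. \<exists>g\<in>E. \<forall>s\<in>carrier S.
        (e \<otimes>\<^bsub>S\<^esub> t \<otimes>\<^bsub>S\<^esub> s = t \<otimes>\<^bsub>S\<^esub> s \<longleftrightarrow> g \<otimes>\<^bsub>S\<^esub> s = s)) \<and>
     (\<forall>s\<in>carrier S. \<forall>e\<in>E. \<forall>f\<in>E.
        e \<otimes>\<^bsub>S\<^esub> s = s \<and> f \<otimes>\<^bsub>S\<^esub> s = s \<longrightarrow> meet S E e f \<otimes>\<^bsub>S\<^esub> s = s)"

definition RRest_carrier :: "('m, 'b) monoid_scheme \<Rightarrow> 'm set \<Rightarrow> ('m \<times> 'm) set" where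
  "RRest_carrier S E = {(s, e). s \<in> carrier S \<and> e \<in> E \<and> s \<otimes>\<^bsub>S\<^esub> e = s}"

definition RRest_mult :: "('m, 'b) monoid_scheme \<Rightarrow> 'm set \<Rightarrow> 'm \<times> 'm \<Rightarrow> 'm \<times> 'm \<Rightarrow> 'm \<times> 'm" where
  "RRest_mult S E p q = (case p of (s, e) \<Rightarrow> case q of (t, f) \<Rightarrow>
      (let g = meet S E (dot S E e t) f in (s \<otimes>\<^bsub>S\<^esub> t \<otimes>\<^bsub>S\<^esub> g, g)))"

definition RRest_R :: "'m \<times> 'm \<Rightarrow> 'm \<times> 'm" where
  "RRest_R p = (case p of (s, e) \<Rightarrow> (e, e))"

section \<open>The full transformation monoid T_X (maps composed left to right)\<close>

definition TX :: "'a set \<Rightarrow> ('a \<Rightarrow> 'a) monoid" where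
  "TX A = \<lparr>carrier = A \<rightarrow>\<^sub>E A, mult = (\<lambda>s t. compose A t s), one = (\<lambda>x\<in>A. x)\<rparr>"

text \<open>Und x = x \<in> X, Pr x = x' \<in> X', DPr x = x'' \<in> X''\<close>
datatype 'a pt = Und 'a | Pr 'a | DPr 'a

definition base :: "'a set \<Rightarrow> 'a pt set" where
  "base A = Und ` A \<union> Pr ` A"

definition partitions :: "'a set \<Rightarrow> 'a pt set set set" where
  "partitions A = {P. partition_on (base A) P}"

fun down_pt :: "'a pt \<Rightarrow> 'a pt" where
  "down_pt (Und x) = Und x" | "down_pt (Pr x) = DPr x" | "down_pt (DPr x) = DPr x"

fun up_pt :: "'a pt \<Rightarrow> 'a pt" where
  "up_pt (Und x) = DPr x" | "up_pt (Pr x) = Pr x" | "up_pt (DPr x) = DPr x"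

text \<open>adjacency in the graph on X \<union> X'' \<union> X'\<close>
definition pconn :: "'a pt set set \<Rightarrow> 'a pt set set \<Rightarrow> 'a pt \<Rightarrow> 'a pt \<Rightarrow> bool" where
  "pconn \<alpha> \<beta> u v \<longleftrightarrow> (\<exists>B \<in> (image down_pt ` \<alpha>) \<union> (image up_pt ` \<beta>). u \<in> B \<and> v \<in> B)"

definition pmult :: "'a set \<Rightarrow> 'a pt set set \<Rightarrow> 'a pt set set \<Rightarrow> 'a pt set set" where
  "pmult A \<alpha> \<beta> =
     {C \<inter> base A | C. \<exists>u \<in> Und ` A \<union> DPr ` A \<union> Pr ` A. C = {v. (pconn \<alpha> \<beta>)\<^sup>*\<^sup>* u v}} - {{}}"

definition left_total :: "'a set \<Rightarrow> 'a pt set set \<Rightarrow> bool" where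
  "left_total A \<rho> \<longleftrightarrow> (\<forall>x\<in>A. \<exists>B\<in>\<rho>. Und x \<in> B \<and> (\<exists>y\<in>A. Pr y \<in> B))"

definition Plt :: "'a set \<Rightarrow> 'a pt set set set" where
  "Plt A = {\<rho> \<in> partitions A. left_total A \<rho>}"

definition Rrel :: "'a set \<Rightarrow> 'a pt set set \<Rightarrow> ('a \<times> 'a) set" where
  "Rrel A \<rho> = {(x, y). x \<in> A \<and> y \<in> A \<and> (\<exists>B\<in>\<rho>. Pr x \<in> B \<and> Pr y \<in> B)}"

definition Rop :: "'a set \<Rightarrow> 'a pt set set \<Rightarrow> 'a pt set set" where
  "Rop A \<rho> = {Und ` C \<union> Pr ` C | C. C \<in> A // Rrel A \<rho>}"

end

theory Submission
  imports Defs
begin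

lemma equiv_iff:
  "equiv A r \<longleftrightarrow> r \<subseteq> A \<times> A \<and> (\<forall>x\<in>A. (x,x)\<in>r) \<and> (\<forall>x y. (x,y)\<in>r \<longrightarrow> (y,x)\<in>r)
     \<and> (\<forall>x y z. (x,y)\<in>r \<longrightarrow> (y,z)\<in>r \<longrightarrow> (x,z)\<in>r)"
  unfolding equiv_def refl_on_def sym_def trans_def by blast

definition kerA :: "'a set \<Rightarrow> ('a \<Rightarrow> 'b) \<Rightarrow> ('a \<times> 'a) set" where
  "kerA A f = {(x,y). x \<in> A \<and> y \<in> A \<and> f x = f y}"

lemma equiv_kerA: "equiv A (kerA A f)"
  unfolding equiv_iff kerA_def by auto

definition eqc :: "'a set \<Rightarrow> ('a \<times> 'a) set \<Rightarrow> ('a \<times> 'a) set" where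
  "eqc A R = \<Inter>{K. equiv A K \<and> R \<subseteq> K}"

lemma eqc_equiv: assumes "R \<subseteq> A \<times> A" shows "equiv A (eqc A R)"
proof -
  let ?F = "{K. equiv A K \<and> R \<subseteq> K}"
  have "equiv A (A \<times> A)" unfolding equiv_iff by auto
  with assms have ne: "A \<times> A \<in> ?F" by auto
  have 1: "\<Inter>?F \<subseteq> A \<times> A" using ne by (rule Inter_lower)
  have 2: "\<forall>x\<in>A. (x,x) \<in> \<Inter>?F"
  proof
    fix x assume x: "x \<in> A"
    show "(x,x) \<in> \<Inter>?F"
    proof (rule InterI)
      fix K assume "K \<in> ?F" then have "equiv A K" by simp
      then show "(x,x) \<in> K" using x unfolding equiv_iff by blast
    qed
  qed
  have 3: "\<forall>x y. (x,y) \<in> \<Inter>?F \<longrightarrow> (y,x) \<in> \<Inter>?F"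
  proof (intro allI impI InterI)
    fix x y K assume xy: "(x,y) \<in> \<Inter>?F" and K: "K \<in> ?F"
    then have "(x,y) \<in> K" by blast
    moreover have "equiv A K" using K by simp
    ultimately show "(y,x) \<in> K" unfolding equiv_iff by blast
  qed
  have 4: "\<forall>x y z. (x,y) \<in> \<Inter>?F \<longrightarrow> (y,z) \<in> \<Inter>?F \<longrightarrow> (x,z) \<in> \<Inter>?F"
  proof (intro allI impI InterI)
    fix x y z K assume xy: "(x,y) \<in> \<Inter>?F" and yz: "(y,z) \<in> \<Inter>?F" and K: "K \<in> ?F"
    then have "(x,y) \<in> K" "(y,z) \<in> K" by blast+
    moreover have "equiv A K" using K by simp
    ultimately show "(x,z) \<in> K" unfolding equiv_iff by blast
  qed
  show ?thesis using 1 2 3 4 unfolding eqc_def equiv_iff by (intro conjI) assumption+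
qed

lemma eqc_sub: "R \<subseteq> eqc A R"
  unfolding eqc_def by blast

lemma eqc_min: "equiv A K \<Longrightarrow> R \<subseteq> K \<Longrightarrow> eqc A R \<subseteq> K"
  unfolding eqc_def by blast

lemma TX_carrier: "carrier (TX A) = A \<rightarrow>\<^sub>E A" by (simp add: TX_def)
lemma TX_mult: "s \<otimes>\<^bsub>TX A\<^esub> t = compose A t s" by (simp add: TX_def)
lemma TX_one: "\<one>\<^bsub>TX A\<^esub> = (\<lambda>x\<in>A. x)" by (simp add: TX_def)

lemma monoid_TX: "monoid (TX A)"
  apply (rule monoidI)
  apply (auto simp: TX_def compose_def PiE_def Pi_def extensional_def fun_eq_iff)
  done

lemma compose_eq_iff:
  assumes "f \<in> extensional A" 
  shows "compose A g h = f \<longleftrightarrow> (\<forall>x\<in>A. g (h x) = f x)"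
  using assms unfolding compose_def extensional_def fun_eq_iff by auto

lemma idems_TX: "e \<in> idems (TX A) \<longleftrightarrow> e \<in> A \<rightarrow>\<^sub>E A \<and> (\<forall>x\<in>A. e (e x) = e x)"
  unfolding idems_def TX_carrier TX_mult using compose_eq_iff[of e A e e] by (auto simp: PiE_def)

lemma idem_ker: "e \<in> idems (TX A) \<Longrightarrow> x \<in> A \<Longrightarrow> (e x, x) \<in> kerA A e"
  unfolding idems_TX kerA_def by auto

lemma le_l_TX:
  assumes k: "k \<in> A \<rightarrow>\<^sub>E A" and e: "e \<in> idems (TX A)"
  shows "le_l (TX A) k e \<longleftrightarrow> kerA A e \<subseteq> kerA A k"
proof -
  have "le_l (TX A) k e \<longleftrightarrow> (\<forall>x\<in>A. k (e x) = k x)"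
    unfolding le_l_def TX_mult using compose_eq_iff[of k A k e] k by (auto simp: PiE_def)
  also have "\<dots> \<longleftrightarrow> kerA A e \<subseteq> kerA A k"
  proof
    assume h: "\<forall>x\<in>A. k (e x) = k x"
    show "kerA A e \<subseteq> kerA A k"
      unfolding kerA_def using h by auto (metis)
  next
    assume h: "kerA A e \<subseteq> kerA A k"
    show "\<forall>x\<in>A. k (e x) = k x"
      using h idem_ker[OF e] unfolding kerA_def by blast
  qed
  finally show ?thesis .
qed

definition repI :: "'a set \<Rightarrow> ('a \<times> 'a) set \<Rightarrow> 'a \<Rightarrow> 'a" where
  "repI A K = (\<lambda>x\<in>A. SOME y. y \<in> K``{x})"

lemma repI:
  assumes K: "equiv A K"
  shows "repI A K \<in> idems (TX A)" "kerA A (repI A K) = K"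
proof -
  have mem: "(x, SOME y. y \<in> K``{x}) \<in> K" if "x \<in> A" for x
    using someI[of "\<lambda>y. y \<in> K``{x}" x] equiv_class_self[OF K that] by auto
  have inA: "(SOME y. y \<in> K``{x}) \<in> A" if "x \<in> A" for x
    using mem[OF that] K unfolding equiv_iff by blast
  have same: "K``{x} = K``{y}" if "(x,y) \<in> K" for x y
    using that K by (simp add: equiv_class_eq_iff)
  have "repI A K (repI A K x) = repI A K x" if "x \<in> A" for x
  proof -
    have "K``{SOME y. y \<in> K``{x}} = K``{x}" by (rule sym[OF same[OF mem[OF that]]])
    then have "(SOME y. y \<in> K``{SOME y. y \<in> K``{x}}) = (SOME y. y \<in> K``{x})" by (simp only:)
    then show ?thesis using that inA[OF that] unfolding repI_def by (simp only: restrict_apply' )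
  qed
  then show i: "repI A K \<in> idems (TX A)"
    unfolding idems_TX repI_def using inA by auto
  show "kerA A (repI A K) = K"
  proof
    show "kerA A (repI A K) \<subseteq> K"
    proof
      fix p assume "p \<in> kerA A (repI A K)"
      then obtain x y where p: "p = (x,y)" "x \<in> A" "y \<in> A" "repI A K x = repI A K y"
        unfolding kerA_def by auto
      have "(x, repI A K x) \<in> K" "(y, repI A K y) \<in> K" using mem p(2,3) by (auto simp: repI_def)
      then show "p \<in> K" using p K unfolding equiv_iff by metis
    qed
    show "K \<subseteq> kerA A (repI A K)"
    proof
      fix p assume pK: "p \<in> K"
      then obtain x y where p: "p = (x,y)" by (cases p)
      have sub: "K \<subseteq> A \<times> A" using K unfolding equiv_def by blast
      have xy: "x \<in> A" "y \<in> A" using pK p sub by auto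
      have "K``{x} = K``{y}" using same pK p by simp
      then have e: "(SOME z. z \<in> K``{x}) = (SOME z. z \<in> K``{y})" by (simp only:)
      have "repI A K x = repI A K y"
        unfolding repI_def restrict_apply'[OF xy(1)] restrict_apply'[OF xy(2)] by (rule e)
      then show "p \<in> kerA A (repI A K)" using xy p unfolding kerA_def by blast
    qed
  qed
qed


lemma equiv_refl: "equiv A K \<Longrightarrow> x \<in> A \<Longrightarrow> (x,x) \<in> K"
  unfolding equiv_def refl_on_def by blast
lemma equiv_sym: "equiv A K \<Longrightarrow> (x,y) \<in> K \<Longrightarrow> (y,x) \<in> K"
  unfolding equiv_def sym_def by blast
lemma equiv_trans: "equiv A K \<Longrightarrow> (x,y) \<in> K \<Longrightarrow> (y,z) \<in> K \<Longrightarrow> (x,z) \<in> K"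
  unfolding equiv_def trans_def by blast
lemma equiv_sub: "equiv A K \<Longrightarrow> (x,y) \<in> K \<Longrightarrow> x \<in> A \<and> y \<in> A"
  unfolding equiv_def by blast

lemma eqc_le_iff: "equiv A K \<Longrightarrow> eqc A R \<subseteq> K \<longleftrightarrow> R \<subseteq> K"
  using eqc_sub[of R A] eqc_min[of A K R] by blast

lemma compose_PiE: "f \<in> A \<rightarrow>\<^sub>E A \<Longrightarrow> g \<in> A \<rightarrow>\<^sub>E A \<Longrightarrow> compose A g f \<in> A \<rightarrow>\<^sub>E A"
  by (auto simp: compose_def PiE_def Pi_def extensional_def)

lemma kerA_sub: "kerA A f \<subseteq> A \<times> A" unfolding kerA_def by auto

lemma kerA_iff: "(x,y) \<in> kerA A f \<longleftrightarrow> x \<in> A \<and> y \<in> A \<and> f x = f y"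
  unfolding kerA_def by simp

lemma idems_carrier: "e \<in> idems (TX A) \<Longrightarrow> e \<in> A \<rightarrow>\<^sub>E A"
  unfolding idems_TX by simp

lemma sim_l_TX:
  assumes "e \<in> idems (TX A)" "f \<in> idems (TX A)"
  shows "sim_l (TX A) e f \<longleftrightarrow> kerA A e = kerA A f"
  unfolding sim_l_def using le_l_TX[OF idems_carrier[OF assms(1)] assms(2)]
    le_l_TX[OF idems_carrier[OF assms(2)] assms(1)] by blast

lemma funcset_ext_eq:
  assumes "f \<in> A \<rightarrow>\<^sub>E B" "g \<in> A \<rightarrow>\<^sub>E C" "\<And>x. x \<in> A \<Longrightarrow> f x = g x"
  shows "f = g"
proof (rule extensionalityI)
  show "f \<in> extensional A" "g \<in> extensional A" using assms(1,2) by (auto simp: PiE_def)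
qed (rule assms(3))

lemma id_in_idems: "(\<lambda>x\<in>A. x) \<in> idems (TX A)"
  unfolding idems_TX by auto

lemma le_l_self: "e \<in> idems (TX A) \<Longrightarrow> le_l (TX A) e e"
  unfolding le_l_def idems_def by simp

locale TXE =
  fixes A :: "'a set" and E :: "('a \<Rightarrow> 'a) set"
  assumes mlpr: "max_left_pre_reduced (TX A) E"
begin

lemma E_idems: "E \<subseteq> idems (TX A)"
  using mlpr unfolding max_left_pre_reduced_def by blast

lemma E_carrier: "e \<in> E \<Longrightarrow> e \<in> A \<rightarrow>\<^sub>E A"
  using E_idems idems_carrier by blast

lemma E_ker_inj:
  assumes "e \<in> E" "f \<in> E" "kerA A e = kerA A f"
  shows "e = f"
proof -
  have ei: "e \<in> idems (TX A)" and fi: "f \<in> idems (TX A)" using assms E_idems by auto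
  have "\<exists>!g. g \<in> E \<and> sim_l (TX A) e g" using mlpr ei unfolding max_left_pre_reduced_def by blast
  moreover have "sim_l (TX A) e e" using sim_l_TX[OF ei ei] by simp
  moreover have "sim_l (TX A) e f" using sim_l_TX[OF ei fi] assms by simp
  ultimately show ?thesis using assms by blast
qed

lemma exists_E_ker:
  assumes "equiv A K"
  shows "\<exists>e\<in>E. kerA A e = K"
proof -
  have r: "repI A K \<in> idems (TX A)" "kerA A (repI A K) = K" using repI[OF assms] by auto
  then obtain f where "f \<in> E" "sim_l (TX A) (repI A K) f"
    using mlpr unfolding max_left_pre_reduced_def by blast
  then show ?thesis using sim_l_TX[OF r(1)] E_idems r(2) by auto
qed

definition eE :: "('a \<times> 'a) set \<Rightarrow> 'a \<Rightarrow> 'a" where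
  "eE K = (THE e. e \<in> E \<and> kerA A e = K)"

lemma eE:
  assumes "equiv A K"
  shows "eE K \<in> E" "kerA A (eE K) = K"
proof -
  obtain e where e: "e \<in> E" "kerA A e = K" using exists_E_ker[OF assms] by blast
  have "eE K = e" unfolding eE_def
    by (rule the_equality) (use e E_ker_inj in auto)
  then show "eE K \<in> E" "kerA A (eE K) = K" using e by auto
qed

lemma eE_ker: "e \<in> E \<Longrightarrow> eE (kerA A e) = e"
  using eE[OF equiv_kerA[of A e]] E_ker_inj by blast

lemma eE_idem: "equiv A K \<Longrightarrow> eE K \<in> idems (TX A)"
  using eE E_idems by blast

lemma one_in_E: "\<one>\<^bsub>TX A\<^esub> \<in> E"
proof -
  obtain f where f: "f \<in> E" "sim_l (TX A) (\<lambda>x\<in>A. x) f"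
    using mlpr id_in_idems unfolding max_left_pre_reduced_def by blast
  have fi: "f \<in> idems (TX A)" using f E_idems by auto
  have k: "kerA A f = kerA A (\<lambda>x\<in>A. x)" using sim_l_TX[OF id_in_idems fi] f by simp
  have "f = (\<lambda>x\<in>A. x)"
  proof (rule funcset_ext_eq[OF idems_carrier[OF fi]])
    show "(\<lambda>x\<in>A. x) \<in> A \<rightarrow>\<^sub>E A" by auto
    fix x assume x: "x \<in> A"
    have "(f x, x) \<in> kerA A f" using idem_ker[OF fi x] .
    then show "f x = (\<lambda>x\<in>A. x) x" using k x unfolding kerA_def by auto
  qed
  then show ?thesis using f by (simp add: TX_one)
qed

lemma lpr: "left_pre_reduced (TX A) E"
  unfolding left_pre_reduced_def
proof (intro conjI ballI impI)
  show "E \<subseteq> idems (TX A)" by (rule E_idems)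
  fix e f assume ef: "e \<in> E" "f \<in> E" "e = f \<otimes>\<^bsub>TX A\<^esub> e \<and> f = e \<otimes>\<^bsub>TX A\<^esub> f"
  then have "sim_l (TX A) e f" unfolding sim_l_def le_l_def by blast
  then have "kerA A e = kerA A f" using sim_l_TX ef E_idems by blast
  then show "e = f" using E_ker_inj ef by blast
qed

lemma le_l_E: "k \<in> E \<Longrightarrow> e \<in> E \<Longrightarrow> le_l (TX A) k e \<longleftrightarrow> kerA A e \<subseteq> kerA A k"
proof -
  assume "k \<in> E" "e \<in> E"
  then show ?thesis using le_l_TX[OF E_carrier[of k], of e] E_idems by blast
qed

lemma E_antisym: "k \<in> E \<Longrightarrow> e \<in> E \<Longrightarrow> le_l (TX A) k e \<Longrightarrow> le_l (TX A) e k \<Longrightarrow> k = e"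
  using le_l_E E_ker_inj by blast

definition mE :: "('a \<Rightarrow> 'a) \<Rightarrow> ('a \<Rightarrow> 'a) \<Rightarrow> 'a \<Rightarrow> 'a" where
  "mE e f = eE (eqc A (kerA A e \<union> kerA A f))"

lemma mE_is_meet:
  assumes "e \<in> E" "f \<in> E"
  shows "is_meet (TX A) E e f (mE e f)"
proof -
  let ?K = "eqc A (kerA A e \<union> kerA A f)"
  have eq: "equiv A ?K" by (rule eqc_equiv) (use kerA_sub in blast)
  have m: "mE e f \<in> E" "kerA A (mE e f) = ?K" using eE[OF eq] unfolding mE_def by auto
  show ?thesis unfolding is_meet_def
  proof (intro conjI ballI impI)
    show "mE e f \<in> E" by (rule m(1))
    show "le_l (TX A) (mE e f) e" using le_l_E[OF m(1) assms(1)] m(2) eqc_sub by blast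
    show "le_l (TX A) (mE e f) f" using le_l_E[OF m(1) assms(2)] m(2) eqc_sub by blast
    fix k assume k: "k \<in> E" "le_l (TX A) k e \<and> le_l (TX A) k f"
    then have "kerA A e \<union> kerA A f \<subseteq> kerA A k" using le_l_E assms by blast
    then have "?K \<subseteq> kerA A k" using eqc_min equiv_kerA by blast
    then show "le_l (TX A) k (mE e f)" using le_l_E[OF k(1) m(1)] m(2) by simp
  qed
qed

lemma meet_eq:
  assumes "e \<in> E" "f \<in> E"
  shows "meet (TX A) E e f = mE e f"
  unfolding meet_def
proof (rule the_equality)
  show "is_meet (TX A) E e f (mE e f)" by (rule mE_is_meet[OF assms])
  fix m assume "is_meet (TX A) E e f m"
  then show "m = mE e f" using mE_is_meet[OF assms] E_antisym unfolding is_meet_def by metis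
qed

lemma ker_meet:
  assumes "e \<in> E" "f \<in> E"
  shows "meet (TX A) E e f \<in> E" "kerA A (meet (TX A) E e f) = eqc A (kerA A e \<union> kerA A f)"
proof -
  have eq: "equiv A (eqc A (kerA A e \<union> kerA A f))" by (rule eqc_equiv) (use kerA_sub in blast)
  show "meet (TX A) E e f \<in> E" "kerA A (meet (TX A) E e f) = eqc A (kerA A e \<union> kerA A f)"
    using eE[OF eq] meet_eq[OF assms] unfolding mE_def by auto
qed

definition dE :: "('a \<Rightarrow> 'a) \<Rightarrow> ('a \<Rightarrow> 'a) \<Rightarrow> 'a \<Rightarrow> 'a" where
  "dE e t = eE (eqc A {(t (e x), t x) | x. x \<in> A})"

lemma dE_prop:
  assumes e: "e \<in> E" and t: "t \<in> A \<rightarrow>\<^sub>E A"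
  shows "dE e t \<in> E" "kerA A (dE e t) = eqc A {(t (e x), t x) | x. x \<in> A}"
    "\<And>s. s \<in> carrier (TX A) \<Longrightarrow>
       (e \<otimes>\<^bsub>TX A\<^esub> t \<otimes>\<^bsub>TX A\<^esub> s = t \<otimes>\<^bsub>TX A\<^esub> s \<longleftrightarrow> dE e t \<otimes>\<^bsub>TX A\<^esub> s = s)"
proof -
  let ?R = "{(t (e x), t x) | x. x \<in> A}"
  have eA: "e \<in> A \<rightarrow>\<^sub>E A" using E_carrier e by blast
  have RA: "?R \<subseteq> A \<times> A" using eA t by auto
  have eq: "equiv A (eqc A ?R)" by (rule eqc_equiv[OF RA])
  show dE: "dE e t \<in> E" "kerA A (dE e t) = eqc A ?R" using eE[OF eq] unfolding dE_def by auto
  fix s assume s: "s \<in> carrier (TX A)"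
  then have sA: "s \<in> A \<rightarrow>\<^sub>E A" by (simp add: TX_carrier)
  have "e \<otimes>\<^bsub>TX A\<^esub> t \<otimes>\<^bsub>TX A\<^esub> s = t \<otimes>\<^bsub>TX A\<^esub> s \<longleftrightarrow> (\<forall>x\<in>A. s (t (e x)) = s (t x))"
  proof -
    have ext: "compose A s t \<in> extensional A" by (simp add: compose_def)
    have "e \<otimes>\<^bsub>TX A\<^esub> t \<otimes>\<^bsub>TX A\<^esub> s = compose A s (compose A t e)" by (simp add: TX_mult)
    moreover have "t \<otimes>\<^bsub>TX A\<^esub> s = compose A s t" by (simp add: TX_mult)
    moreover have "compose A s (compose A t e) = compose A s t \<longleftrightarrow> (\<forall>x\<in>A. s (t (e x)) = s (t x))"
      using compose_eq_iff[OF ext, of s "compose A t e"] eA by (auto simp: compose_def)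
    ultimately show ?thesis by simp
  qed
  also have "\<dots> \<longleftrightarrow> ?R \<subseteq> kerA A s" using eA t by (auto simp: kerA_def)
  also have "\<dots> \<longleftrightarrow> eqc A ?R \<subseteq> kerA A s" by (rule eqc_le_iff[OF equiv_kerA, symmetric])
  also have "\<dots> \<longleftrightarrow> le_l (TX A) s (dE e t)" using le_l_TX[OF sA] dE E_idems by auto
  also have "\<dots> \<longleftrightarrow> dE e t \<otimes>\<^bsub>TX A\<^esub> s = s" unfolding le_l_def by auto
  finally show "(e \<otimes>\<^bsub>TX A\<^esub> t \<otimes>\<^bsub>TX A\<^esub> s = t \<otimes>\<^bsub>TX A\<^esub> s \<longleftrightarrow> dE e t \<otimes>\<^bsub>TX A\<^esub> s = s)" .
qed

lemma dot_eq:
  assumes e: "e \<in> E" and t: "t \<in> A \<rightarrow>\<^sub>E A"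
  shows "dot (TX A) E e t = dE e t"
  unfolding dot_def
proof (rule the_equality)
  show "dE e t \<in> E \<and> (\<forall>s\<in>carrier (TX A). (e \<otimes>\<^bsub>TX A\<^esub> t \<otimes>\<^bsub>TX A\<^esub> s = t \<otimes>\<^bsub>TX A\<^esub> s) = (dE e t \<otimes>\<^bsub>TX A\<^esub> s = s))"
    using dE_prop[OF e t] by blast
  fix g assume g: "g \<in> E \<and> (\<forall>s\<in>carrier (TX A). (e \<otimes>\<^bsub>TX A\<^esub> t \<otimes>\<^bsub>TX A\<^esub> s = t \<otimes>\<^bsub>TX A\<^esub> s) = (g \<otimes>\<^bsub>TX A\<^esub> s = s))"
  have d: "dE e t \<in> E" using dE_prop[OF e t] by blast
  have gc: "g \<in> carrier (TX A)" "dE e t \<in> carrier (TX A)" using g d E_carrier by (auto simp: TX_carrier)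
  have gi: "g \<otimes>\<^bsub>TX A\<^esub> g = g" "dE e t \<otimes>\<^bsub>TX A\<^esub> dE e t = dE e t"
    using g d E_idems unfolding idems_def by auto
  have "dE e t \<otimes>\<^bsub>TX A\<^esub> g = g" using g gi(1) gc dE_prop(3)[OF e t] by blast
  moreover have "g \<otimes>\<^bsub>TX A\<^esub> dE e t = dE e t" using g gi(2) gc dE_prop(3)[OF e t] by blast
  ultimately show "g = dE e t" using E_antisym[of g "dE e t"] g d unfolding le_l_def by metis
qed

lemma TX_inductive: "inductive_right_E_monoid (TX A) E"
  unfolding inductive_right_E_monoid_def
proof (intro conjI ballI impI)
  show "monoid (TX A)" by (rule monoid_TX)
  show "\<one>\<^bsub>TX A\<^esub> \<in> E" by (rule one_in_E)
  show "E \<subseteq> idems (TX A)" by (rule E_idems)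
  show "left_pre_reduced (TX A) E" by (rule lpr)
  fix e f assume "e \<in> E" "f \<in> E"
  then show "\<exists>m. is_meet (TX A) E e f m" using mE_is_meet by blast
next
  fix t e assume t: "t \<in> carrier (TX A)" and e: "e \<in> E"
  then show "\<exists>g\<in>E. \<forall>s\<in>carrier (TX A). (e \<otimes>\<^bsub>TX A\<^esub> t \<otimes>\<^bsub>TX A\<^esub> s = t \<otimes>\<^bsub>TX A\<^esub> s) = (g \<otimes>\<^bsub>TX A\<^esub> s = s)"
    using dE_prop[of e t] by (auto simp: TX_carrier)
next
  fix s e f assume s: "s \<in> carrier (TX A)" and ef: "e \<in> E" "f \<in> E"
    and h: "e \<otimes>\<^bsub>TX A\<^esub> s = s \<and> f \<otimes>\<^bsub>TX A\<^esub> s = s"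
  have sA: "s \<in> A \<rightarrow>\<^sub>E A" using s by (simp add: TX_carrier)
  have h1: "s = e \<otimes>\<^bsub>TX A\<^esub> s" "s = f \<otimes>\<^bsub>TX A\<^esub> s" using h by auto
  have "kerA A e \<subseteq> kerA A s" using le_l_TX[OF sA, of e] ef(1) E_idems h1(1) unfolding le_l_def by blast
  moreover have "kerA A f \<subseteq> kerA A s" using le_l_TX[OF sA, of f] ef(2) E_idems h1(2) unfolding le_l_def by blast
  ultimately have "kerA A e \<union> kerA A f \<subseteq> kerA A s" by blast
  then have "eqc A (kerA A e \<union> kerA A f) \<subseteq> kerA A s" using eqc_le_iff[OF equiv_kerA] by blast
  then have "le_l (TX A) s (meet (TX A) E e f)"
    using le_l_TX[OF sA] ker_meet[OF ef] E_idems by auto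
  then show "meet (TX A) E e f \<otimes>\<^bsub>TX A\<^esub> s = s" unfolding le_l_def by simp
qed

end

lemma protomodal: "right_protomodal (TX A)"
  unfolding right_protomodal_def
proof (intro conjI ballI)
  show "monoid (TX A)" by (rule monoid_TX)
  fix e s assume e: "e \<in> idems (TX A)" and s: "s \<in> carrier (TX A)"
  have eA: "e \<in> A \<rightarrow>\<^sub>E A" using e idems_carrier by blast
  have sA: "s \<in> A \<rightarrow>\<^sub>E A" using s by (simp add: TX_carrier)
  let ?R = "{(s x, s (e x)) | x. x \<in> A}"
  have RA: "?R \<subseteq> A \<times> A" using eA sA by auto
  have eq: "equiv A (eqc A ?R)" by (rule eqc_equiv[OF RA])
  define f where "f = repI A (eqc A ?R)"
  have fi: "f \<in> idems (TX A)" and fk: "kerA A f = eqc A ?R" using repI[OF eq] f_def by auto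
  have fA: "f \<in> A \<rightarrow>\<^sub>E A" using fi idems_carrier by blast
  have char: "u \<in> carrier (TX A) \<Longrightarrow> (s \<otimes>\<^bsub>TX A\<^esub> u = e \<otimes>\<^bsub>TX A\<^esub> s \<otimes>\<^bsub>TX A\<^esub> u \<longleftrightarrow> kerA A f \<subseteq> kerA A u)" for u
  proof -
    assume u: "u \<in> carrier (TX A)"
    have ext: "compose A u s \<in> extensional A" by (simp add: compose_def)
    have "s \<otimes>\<^bsub>TX A\<^esub> u = e \<otimes>\<^bsub>TX A\<^esub> s \<otimes>\<^bsub>TX A\<^esub> u \<longleftrightarrow> compose A u (compose A s e) = compose A u s"
      by (auto simp: TX_mult)
    also have "\<dots> \<longleftrightarrow> (\<forall>x\<in>A. u (s (e x)) = u (s x))"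
      using compose_eq_iff[OF ext, of u "compose A s e"] eA by (auto simp: compose_def)
    also have "\<dots> \<longleftrightarrow> ?R \<subseteq> kerA A u" using eA sA by (auto simp: kerA_def)
    also have "\<dots> \<longleftrightarrow> eqc A ?R \<subseteq> kerA A u" by (rule eqc_le_iff[OF equiv_kerA, symmetric])
    finally show ?thesis using fk by simp
  qed
  have S: "{u \<in> carrier (TX A). s \<otimes>\<^bsub>TX A\<^esub> u = e \<otimes>\<^bsub>TX A\<^esub> s \<otimes>\<^bsub>TX A\<^esub> u}
      = {f \<otimes>\<^bsub>TX A\<^esub> u | u. u \<in> carrier (TX A)}"
  proof (intro equalityI subsetI)
    fix u assume "u \<in> {u \<in> carrier (TX A). s \<otimes>\<^bsub>TX A\<^esub> u = e \<otimes>\<^bsub>TX A\<^esub> s \<otimes>\<^bsub>TX A\<^esub> u}"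
    then have u: "u \<in> carrier (TX A)" "kerA A f \<subseteq> kerA A u" using char by auto
    then have "le_l (TX A) u f" using le_l_TX[OF _ fi] by (simp add: TX_carrier)
    then have "u = f \<otimes>\<^bsub>TX A\<^esub> u" unfolding le_l_def .
    then show "u \<in> {f \<otimes>\<^bsub>TX A\<^esub> u | u. u \<in> carrier (TX A)}" using u by blast
  next
    fix w assume "w \<in> {f \<otimes>\<^bsub>TX A\<^esub> u | u. u \<in> carrier (TX A)}"
    then obtain u where u: "u \<in> carrier (TX A)" "w = f \<otimes>\<^bsub>TX A\<^esub> u" by blast
    have wc: "w \<in> carrier (TX A)" using u fA by (simp add: TX_carrier TX_mult compose_PiE)
    have "kerA A f \<subseteq> kerA A w" using u(2) fA by (auto simp: kerA_def TX_mult compose_def)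
    then show "w \<in> {u \<in> carrier (TX A). s \<otimes>\<^bsub>TX A\<^esub> u = e \<otimes>\<^bsub>TX A\<^esub> s \<otimes>\<^bsub>TX A\<^esub> u}"
      using char[OF wc] wc by blast
  qed
  have "f \<otimes>\<^bsub>TX A\<^esub> \<one>\<^bsub>TX A\<^esub> \<in> {f \<otimes>\<^bsub>TX A\<^esub> u | u. u \<in> carrier (TX A)}"
    using monoid.one_closed[OF monoid_TX] by blast
  then show "{u \<in> carrier (TX A). s \<otimes>\<^bsub>TX A\<^esub> u = e \<otimes>\<^bsub>TX A\<^esub> s \<otimes>\<^bsub>TX A\<^esub> u} \<noteq> {}" using S by auto
  show "\<exists>f\<in>idems (TX A). {u \<in> carrier (TX A). s \<otimes>\<^bsub>TX A\<^esub> u = e \<otimes>\<^bsub>TX A\<^esub> s \<otimes>\<^bsub>TX A\<^esub> u}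
      = {f \<otimes>\<^bsub>TX A\<^esub> u | u. u \<in> carrier (TX A)}" using S fi by blast
qed


definition samebl :: "'b set set \<Rightarrow> 'b \<Rightarrow> 'b \<Rightarrow> bool" where
  "samebl P u v \<longleftrightarrow> (\<exists>B\<in>P. u \<in> B \<and> v \<in> B)"

lemma part_sub: "partition_on X P \<Longrightarrow> B \<in> P \<Longrightarrow> B \<subseteq> X"
  unfolding partition_on_def by blast

lemma part_same: "partition_on X P \<Longrightarrow> B \<in> P \<Longrightarrow> B' \<in> P \<Longrightarrow> u \<in> B \<Longrightarrow> u \<in> B' \<Longrightarrow> B = B'"
  unfolding partition_on_def disjoint_def by blast

lemma part_refl: "partition_on X P \<Longrightarrow> u \<in> X \<Longrightarrow> samebl P u u"
  unfolding partition_on_def samebl_def by blast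

lemma samebl_sym: "samebl P u v \<Longrightarrow> samebl P v u"
  unfolding samebl_def by blast

lemma part_trans: "partition_on X P \<Longrightarrow> samebl P u v \<Longrightarrow> samebl P v w \<Longrightarrow> samebl P u w"
  unfolding samebl_def using part_same by metis

lemma samebl_in: "partition_on X P \<Longrightarrow> samebl P u v \<Longrightarrow> u \<in> X \<and> v \<in> X"
  unfolding samebl_def using part_sub by blast

lemma part_eq_aux:
  assumes P: "partition_on X P" and Q: "partition_on X Q"
    and h: "\<And>u v. u \<in> X \<Longrightarrow> v \<in> X \<Longrightarrow> samebl P u v \<longleftrightarrow> samebl Q u v"
  shows "P \<subseteq> Q"
proof
  fix B assume B: "B \<in> P"
  then have "B \<noteq> {}" using P unfolding partition_on_def by blast
  then obtain u where u: "u \<in> B" by blast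
  have uX: "u \<in> X" using part_sub[OF P B] u by blast
  then obtain B' where B': "B' \<in> Q" "u \<in> B'" using Q unfolding partition_on_def by blast
  have "B = B'"
  proof (intro equalityI subsetI)
    fix v assume v: "v \<in> B"
    have vX: "v \<in> X" using part_sub[OF P B] v by blast
    have "samebl P u v" using B u v unfolding samebl_def by blast
    then have "samebl Q u v" using h uX vX by blast
    then obtain B'' where "B'' \<in> Q" "u \<in> B''" "v \<in> B''" unfolding samebl_def by blast
    then show "v \<in> B'" using part_same[OF Q _ B'(1)] B'(2) by blast
  next
    fix v assume v: "v \<in> B'"
    have vX: "v \<in> X" using part_sub[OF Q B'(1)] v by blast
    have "samebl Q u v" using B' v unfolding samebl_def by blast
    then have "samebl P u v" using h uX vX by blast
    then obtain B'' where "B'' \<in> P" "u \<in> B''" "v \<in> B''" unfolding samebl_def by blast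
    then show "v \<in> B" using part_same[OF P _ B] u by blast
  qed
  then show "B \<in> Q" using B' by simp
qed

lemma part_eqI:
  assumes P: "partition_on X P" and Q: "partition_on X Q"
    and h: "\<And>u v. u \<in> X \<Longrightarrow> v \<in> X \<Longrightarrow> samebl P u v \<longleftrightarrow> samebl Q u v"
  shows "P = Q"
  using part_eq_aux[OF P Q h] part_eq_aux[OF Q P] h by blast

fun keyf :: "('a \<Rightarrow> 'a) \<Rightarrow> 'a pt \<Rightarrow> 'a" where
  "keyf h (Und x) = h x" | "keyf h (Pr a) = a" | "keyf h (DPr a) = a"

definition blk :: "'a set \<Rightarrow> ('a \<times> 'a) set \<Rightarrow> ('a \<Rightarrow> 'a) \<Rightarrow> 'a \<Rightarrow> 'a pt set" where
  "blk A K h a = {v \<in> base A. (a, keyf h v) \<in> K}"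

definition mkP :: "'a set \<Rightarrow> ('a \<times> 'a) set \<Rightarrow> ('a \<Rightarrow> 'a) \<Rightarrow> 'a pt set set" where
  "mkP A K h = blk A K h ` A"

lemma base_cases: "v \<in> base A \<Longrightarrow> (\<And>x. v = Und x \<Longrightarrow> x \<in> A \<Longrightarrow> P) \<Longrightarrow> (\<And>x. v = Pr x \<Longrightarrow> x \<in> A \<Longrightarrow> P) \<Longrightarrow> P"
  unfolding base_def by blast

lemma keyf_in: "h \<in> A \<rightarrow> A \<Longrightarrow> v \<in> base A \<Longrightarrow> keyf h v \<in> A"
  by (erule base_cases) auto

lemma Und_base[simp]: "Und x \<in> base A \<longleftrightarrow> x \<in> A" and Pr_base[simp]: "Pr x \<in> base A \<longleftrightarrow> x \<in> A"
  and DPr_base[simp]: "DPr x \<notin> base A"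
  unfolding base_def by auto

context
  fixes A K h
  assumes K: "equiv A K" and h: "h \<in> A \<rightarrow> A"
begin

lemma blk_key: "v \<in> base A \<Longrightarrow> v \<in> blk A K h (keyf h v)"
  unfolding blk_def using keyf_in[OF h] equiv_refl[OF K] by blast

lemma samebl_mkP:
  assumes u: "u \<in> base A" and v: "v \<in> base A"
  shows "samebl (mkP A K h) u v \<longleftrightarrow> (keyf h u, keyf h v) \<in> K"
proof
  assume "samebl (mkP A K h) u v"
  then obtain a where "a \<in> A" "(a, keyf h u) \<in> K" "(a, keyf h v) \<in> K"
    unfolding samebl_def mkP_def blk_def by blast
  then show "(keyf h u, keyf h v) \<in> K" using equiv_sym[OF K] equiv_trans[OF K] by blast
next
  assume "(keyf h u, keyf h v) \<in> K"
  then have "v \<in> blk A K h (keyf h u)" using v unfolding blk_def by blast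
  moreover have "u \<in> blk A K h (keyf h u)" by (rule blk_key[OF u])
  moreover have "keyf h u \<in> A" by (rule keyf_in[OF h u])
  ultimately show "samebl (mkP A K h) u v" unfolding samebl_def mkP_def by blast
qed

lemma mkP_partition: "partition_on (base A) (mkP A K h)"
  unfolding partition_on_def
proof (intro conjI)
  show "\<Union>(mkP A K h) = base A"
  proof
    show "\<Union>(mkP A K h) \<subseteq> base A" unfolding mkP_def blk_def by blast
    show "base A \<subseteq> \<Union>(mkP A K h)" using blk_key keyf_in[OF h] unfolding mkP_def by blast
  qed
  show "disjoint (mkP A K h)"
  proof (rule disjointI)
    fix B1 B2 assume B: "B1 \<in> mkP A K h" "B2 \<in> mkP A K h" "B1 \<noteq> B2"
    then obtain a b where ab: "a \<in> A" "b \<in> A" "B1 = blk A K h a" "B2 = blk A K h b"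
      unfolding mkP_def by blast
    show "B1 \<inter> B2 = {}"
    proof (rule ccontr)
      assume "B1 \<inter> B2 \<noteq> {}"
      then obtain v where "(a, keyf h v) \<in> K" "(b, keyf h v) \<in> K" using ab unfolding blk_def by blast
      then have abK: "(a,b) \<in> K" "(b,a) \<in> K" using equiv_sym[OF K] equiv_trans[OF K] by blast+
      have "blk A K h a = blk A K h b"
        unfolding blk_def using abK equiv_trans[OF K] by blast
      then show False using B ab by simp
    qed
  qed
  show "{} \<notin> mkP A K h"
  proof
    assume "{} \<in> mkP A K h"
    then obtain a where a: "a \<in> A" "blk A K h a = {}" unfolding mkP_def by blast
    have "Pr a \<in> blk A K h a" using a(1) equiv_refl[OF K] unfolding blk_def by simp
    then show False using a by simp
  qed
qed

lemma mkP_Plt: "mkP A K h \<in> Plt A"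
  unfolding Plt_def partitions_def
proof (intro CollectI conjI)
  show "partition_on (base A) (mkP A K h)" by (rule mkP_partition)
  show "left_total A (mkP A K h)" unfolding left_total_def
  proof
    fix x assume x: "x \<in> A"
    then have hx: "h x \<in> A" using h by blast
    have "Und x \<in> blk A K h (h x)" "Pr (h x) \<in> blk A K h (h x)"
      unfolding blk_def using x hx equiv_refl[OF K] by auto
    then show "\<exists>B\<in>mkP A K h. Und x \<in> B \<and> (\<exists>y\<in>A. Pr y \<in> B)" using hx unfolding mkP_def by blast
  qed
qed

lemma Rrel_mkP: "Rrel A (mkP A K h) = K"
proof -
  have "(x,y) \<in> Rrel A (mkP A K h) \<longleftrightarrow> (x,y) \<in> K" for x y
  proof -
    have "(x,y) \<in> Rrel A (mkP A K h) \<longleftrightarrow> x \<in> A \<and> y \<in> A \<and> samebl (mkP A K h) (Pr x) (Pr y)"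
      unfolding Rrel_def samebl_def by blast
    also have "\<dots> \<longleftrightarrow> (x,y) \<in> K" using samebl_mkP[of "Pr x" "Pr y"] equiv_sub[OF K] by auto
    finally show ?thesis .
  qed
  then show ?thesis by auto
qed

end

lemma mkP_cong:
  assumes K: "equiv A K" and "\<forall>x\<in>A. (h1 x, h2 x) \<in> K"
  shows "mkP A K h1 = mkP A K h2"
proof -
  have "blk A K h1 a = blk A K h2 a" if "a \<in> A" for a
  proof -
    have "(a, keyf h1 v) \<in> K \<longleftrightarrow> (a, keyf h2 v) \<in> K" if v: "v \<in> base A" for v
      using v
    proof (rule base_cases)
      fix x assume "v = Und x" "x \<in> A"
      then have "(h1 x, h2 x) \<in> K" "(h2 x, h1 x) \<in> K" using assms(2) equiv_sym[OF K] by auto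
      then show ?thesis using \<open>v = Und x\<close> equiv_trans[OF K] by auto
    qed auto
    then show ?thesis unfolding blk_def by blast
  qed
  then show ?thesis unfolding mkP_def by auto
qed

definition hr :: "'a set \<Rightarrow> 'a pt set set \<Rightarrow> 'a \<Rightarrow> 'a" where
  "hr A \<rho> = (\<lambda>x\<in>A. SOME y. y \<in> A \<and> samebl \<rho> (Und x) (Pr y))"

context
  fixes A \<rho>
  assumes \<rho>: "\<rho> \<in> Plt A"
begin

lemma rho_part: "partition_on (base A) \<rho>"
  using \<rho> unfolding Plt_def partitions_def by blast

lemma hr_prop: "x \<in> A \<Longrightarrow> hr A \<rho> x \<in> A \<and> samebl \<rho> (Und x) (Pr (hr A \<rho> x))"
proof -
  assume x: "x \<in> A"
  then obtain B y where "B \<in> \<rho>" "Und x \<in> B" "y \<in> A" "Pr y \<in> B"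
    using \<rho> unfolding Plt_def left_total_def by blast
  then have "\<exists>y. y \<in> A \<and> samebl \<rho> (Und x) (Pr y)" unfolding samebl_def by blast
  then have "(SOME y. y \<in> A \<and> samebl \<rho> (Und x) (Pr y)) \<in> A \<and>
     samebl \<rho> (Und x) (Pr (SOME y. y \<in> A \<and> samebl \<rho> (Und x) (Pr y)))" by (rule someI_ex)
  then show ?thesis unfolding hr_def using x by simp
qed

lemma hr_fun: "hr A \<rho> \<in> A \<rightarrow> A"
  using hr_prop by blast

lemma Rrel_iff: "(x,y) \<in> Rrel A \<rho> \<longleftrightarrow> x \<in> A \<and> y \<in> A \<and> samebl \<rho> (Pr x) (Pr y)"
  unfolding Rrel_def samebl_def by blast

lemma Rrel_equiv: "equiv A (Rrel A \<rho>)"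
  unfolding equiv_iff
proof (intro conjI allI impI ballI)
  show "Rrel A \<rho> \<subseteq> A \<times> A" using Rrel_iff by auto
  fix x assume "x \<in> A" then show "(x,x) \<in> Rrel A \<rho>" using Rrel_iff part_refl[OF rho_part] by simp
next
  fix x y assume "(x,y) \<in> Rrel A \<rho>" then show "(y,x) \<in> Rrel A \<rho>" using Rrel_iff samebl_sym by metis
next
  fix x y z assume "(x,y) \<in> Rrel A \<rho>" "(y,z) \<in> Rrel A \<rho>"
  then show "(x,z) \<in> Rrel A \<rho>" using Rrel_iff part_trans[OF rho_part] by metis
qed

lemma key_same: "v \<in> base A \<Longrightarrow> samebl \<rho> v (Pr (keyf (hr A \<rho>) v))"
  by (erule base_cases) (auto simp: hr_prop part_refl[OF rho_part])

lemma rho_mkP: "\<rho> = mkP A (Rrel A \<rho>) (hr A \<rho>)"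
proof (rule part_eqI[OF rho_part mkP_partition[OF Rrel_equiv hr_fun]])
  fix u v assume u: "u \<in> base A" and v: "v \<in> base A"
  have ku: "keyf (hr A \<rho>) u \<in> A" and kv: "keyf (hr A \<rho>) v \<in> A" using keyf_in[OF hr_fun] u v by auto
  have "samebl \<rho> u v \<longleftrightarrow> samebl \<rho> (Pr (keyf (hr A \<rho>) u)) (Pr (keyf (hr A \<rho>) v))"
    using key_same[OF u] key_same[OF v] samebl_sym part_trans[OF rho_part] by meson
  also have "\<dots> \<longleftrightarrow> (keyf (hr A \<rho>) u, keyf (hr A \<rho>) v) \<in> Rrel A \<rho>" using Rrel_iff ku kv by simp
  also have "\<dots> \<longleftrightarrow> samebl (mkP A (Rrel A \<rho>) (hr A \<rho>)) u v"
    using samebl_mkP[OF Rrel_equiv hr_fun u v] by simp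
  finally show "samebl \<rho> u v \<longleftrightarrow> samebl (mkP A (Rrel A \<rho>) (hr A \<rho>)) u v" .
qed

end

lemma Rop_mkP:
  assumes K: "Rrel A \<rho> = K" "equiv A K"
  shows "Rop A \<rho> = mkP A K (\<lambda>x\<in>A. x)"
proof -
  have "Und ` C \<union> Pr ` C = blk A K (\<lambda>x\<in>A. x) a" if "C = K``{a}" "a \<in> A" for C a
  proof (intro equalityI subsetI)
    fix v assume "v \<in> Und ` C \<union> Pr ` C"
    then show "v \<in> blk A K (\<lambda>x\<in>A. x) a" using that equiv_sub[OF K(2)] unfolding blk_def by auto
  next
    fix v assume v: "v \<in> blk A K (\<lambda>x\<in>A. x) a"
    then have "v \<in> base A" unfolding blk_def by blast
    then show "v \<in> Und ` C \<union> Pr ` C"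
    proof (rule base_cases)
      fix x assume "v = Und x" "x \<in> A"
      then show ?thesis using v that unfolding blk_def by auto
    next
      fix x assume "v = Pr x" "x \<in> A"
      then show ?thesis using v that unfolding blk_def by auto
    qed
  qed
  then have e: "\<And>a. a \<in> A \<Longrightarrow> Und ` (K``{a}) \<union> Pr ` (K``{a}) = blk A K (\<lambda>x\<in>A. x) a" by blast
  show ?thesis unfolding Rop_def mkP_def quotient_def K(1)
  proof (intro equalityI subsetI)
    fix B assume "B \<in> {Und ` C \<union> Pr ` C |C. C \<in> (\<Union>x\<in>A. {K `` {x}})}"
    then obtain a where "a \<in> A" "B = Und ` (K``{a}) \<union> Pr ` (K``{a})" by blast
    then show "B \<in> blk A K (\<lambda>x\<in>A. x) ` A" using e by auto
  next
    fix B assume "B \<in> blk A K (\<lambda>x\<in>A. x) ` A"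
    then obtain a where a: "a \<in> A" "B = blk A K (\<lambda>x\<in>A. x) a" by blast
    then have "B = Und ` (K``{a}) \<union> Pr ` (K``{a})" using e by auto
    then show "B \<in> {Und ` C \<union> Pr ` C |C. C \<in> (\<Union>x\<in>A. {K `` {x}})}" using a by blast
  qed
qed


fun kk :: "('a \<Rightarrow> 'a) \<Rightarrow> ('a \<Rightarrow> 'a) \<Rightarrow> 'a pt \<Rightarrow> 'a" where
  "kk h1 h2 (Und x) = h2 (h1 x)" | "kk h1 h2 (DPr y) = h2 y" | "kk h1 h2 (Pr a) = a"

lemma pconn_sym: "pconn \<alpha> \<beta> u v \<Longrightarrow> pconn \<alpha> \<beta> v u"
  unfolding pconn_def by blast

lemma conn_sym: "(pconn \<alpha> \<beta>)\<^sup>*\<^sup>* u v \<Longrightarrow> (pconn \<alpha> \<beta>)\<^sup>*\<^sup>* v u"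
proof (induction rule: rtranclp_induct)
  case base then show ?case by simp
next
  case (step y z)
  then show ?case using pconn_sym converse_rtranclp_into_rtranclp by metis
qed

definition R3 :: "('a \<times> 'a) set \<Rightarrow> ('a \<times> 'a) set \<Rightarrow> ('a \<Rightarrow> 'a) \<Rightarrow> ('a \<times> 'a) set" where
  "R3 K1 K2 h2 = K2 \<union> {(h2 a, h2 b) | a b. (a,b) \<in> K1}"

context
  fixes A K1 K2 h1 h2
  assumes K1: "equiv A K1" and K2: "equiv A K2" and h1: "h1 \<in> A \<rightarrow> A" and h2: "h2 \<in> A \<rightarrow> A"
begin

abbreviation "K3 \<equiv> eqc A (R3 K1 K2 h2)"
abbreviation "U \<equiv> Und ` A \<union> DPr ` A \<union> Pr ` A"
abbreviation "conn \<equiv> (pconn (mkP A K1 h1) (mkP A K2 h2))\<^sup>*\<^sup>*"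

lemma R3_sub: "R3 K1 K2 h2 \<subseteq> A \<times> A"
proof
  fix p assume "p \<in> R3 K1 K2 h2"
  then consider "p \<in> K2" | a b where "(a,b) \<in> K1" "p = (h2 a, h2 b)" unfolding R3_def by blast
  then show "p \<in> A \<times> A"
  proof cases
    case 1 then show ?thesis using K2 unfolding equiv_def by blast
  next
    case 2 then have "a \<in> A" "b \<in> A" using equiv_sub[OF K1] by auto
    then show ?thesis using 2 h2 by auto
  qed
qed

lemma K3: "equiv A K3" by (rule eqc_equiv[OF R3_sub])

lemma K2_K3: "(a,b) \<in> K2 \<Longrightarrow> (a,b) \<in> K3"
  using eqc_sub[of "R3 K1 K2 h2" A] unfolding R3_def by blast

lemma K1_K3: "(a,b) \<in> K1 \<Longrightarrow> (h2 a, h2 b) \<in> K3"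
  using eqc_sub[of "R3 K1 K2 h2" A] unfolding R3_def by blast

lemma kk_in: "u \<in> U \<Longrightarrow> kk h1 h2 u \<in> A"
  using h1 h2 by auto

lemma down_blk:
  assumes "u' \<in> blk A K1 h1 a" "a \<in> A"
  shows "down_pt u' \<in> U \<and> (h2 a, kk h1 h2 (down_pt u')) \<in> K3"
proof -
  have u': "u' \<in> base A" "(a, keyf h1 u') \<in> K1" using assms unfolding blk_def by auto
  from u'(1) show ?thesis
  proof (rule base_cases)
    fix x assume "u' = Und x" "x \<in> A"
    then show ?thesis using u'(2) K1_K3 by auto
  next
    fix x assume "u' = Pr x" "x \<in> A"
    then show ?thesis using u'(2) K1_K3 by auto
  qed
qed

lemma up_blk:
  assumes "u' \<in> blk A K2 h2 a" "a \<in> A"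
  shows "up_pt u' \<in> U \<and> (a, kk h1 h2 (up_pt u')) \<in> K3"
proof -
  have u': "u' \<in> base A" "(a, keyf h2 u') \<in> K2" using assms unfolding blk_def by auto
  from u'(1) show ?thesis
  proof (rule base_cases)
    fix x assume "u' = Und x" "x \<in> A"
    then show ?thesis using u'(2) K2_K3 by auto
  next
    fix x assume "u' = Pr x" "x \<in> A"
    then show ?thesis using u'(2) K2_K3 by auto
  qed
qed

lemma step_key:
  assumes "pconn (mkP A K1 h1) (mkP A K2 h2) u v"
  shows "u \<in> U \<and> v \<in> U \<and> (kk h1 h2 u, kk h1 h2 v) \<in> K3"
proof -
  obtain B where B: "B \<in> (image down_pt ` mkP A K1 h1) \<union> (image up_pt ` mkP A K2 h2)" "u \<in> B" "v \<in> B"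
    using assms unfolding pconn_def by blast
  from B(1) obtain c where c: "c \<in> A" "u \<in> U" "v \<in> U" "(c, kk h1 h2 u) \<in> K3" "(c, kk h1 h2 v) \<in> K3"
  proof
    assume "B \<in> image down_pt ` mkP A K1 h1"
    then obtain a where a: "a \<in> A" "B = down_pt ` blk A K1 h1 a" unfolding mkP_def by blast
    then obtain u' v' where "u = down_pt u'" "v = down_pt v'" "u' \<in> blk A K1 h1 a" "v' \<in> blk A K1 h1 a"
      using B by blast
    then have "u \<in> U" "v \<in> U" "(h2 a, kk h1 h2 u) \<in> K3" "(h2 a, kk h1 h2 v) \<in> K3"
      using down_blk a(1) by blast+
    moreover have "h2 a \<in> A" using a h2 by blast
    ultimately show thesis using that by blast
  next
    assume "B \<in> image up_pt ` mkP A K2 h2"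
    then obtain a where a: "a \<in> A" "B = up_pt ` blk A K2 h2 a" unfolding mkP_def by blast
    then obtain u' v' where "u = up_pt u'" "v = up_pt v'" "u' \<in> blk A K2 h2 a" "v' \<in> blk A K2 h2 a"
      using B by blast
    then have "u \<in> U" "v \<in> U" "(a, kk h1 h2 u) \<in> K3" "(a, kk h1 h2 v) \<in> K3"
      using up_blk a(1) by blast+
    then show thesis using that a by blast
  qed
  then show ?thesis using equiv_sym[OF K3] equiv_trans[OF K3] by blast
qed

lemma conn_key:
  assumes "conn u v" "u \<in> U"
  shows "v \<in> U \<and> (kk h1 h2 u, kk h1 h2 v) \<in> K3"
  using assms(1)
proof (induction rule: rtranclp_induct)
  case base then show ?case using assms(2) kk_in equiv_refl[OF K3] by blast
next
  case (step y z)
  then show ?case using step_key equiv_trans[OF K3] by blast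
qed

lemma pconn_down:
  assumes "a \<in> A" "u' \<in> blk A K1 h1 a" "v' \<in> blk A K1 h1 a"
  shows "pconn (mkP A K1 h1) (mkP A K2 h2) (down_pt u') (down_pt v')"
  unfolding pconn_def mkP_def
proof (rule bexI[where x="down_pt ` blk A K1 h1 a"])
  show "down_pt u' \<in> down_pt ` blk A K1 h1 a \<and> down_pt v' \<in> down_pt ` blk A K1 h1 a" using assms by blast
  have "down_pt ` blk A K1 h1 a \<in> image down_pt ` blk A K1 h1 ` A" using assms(1) by blast
  then show "down_pt ` blk A K1 h1 a \<in> image down_pt ` blk A K1 h1 ` A \<union> image up_pt ` blk A K2 h2 ` A" by (rule UnI1)
qed

lemma pconn_up:
  assumes "a \<in> A" "u' \<in> blk A K2 h2 a" "v' \<in> blk A K2 h2 a"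
  shows "pconn (mkP A K1 h1) (mkP A K2 h2) (up_pt u') (up_pt v')"
  unfolding pconn_def mkP_def
proof (rule bexI[where x="up_pt ` blk A K2 h2 a"])
  show "up_pt u' \<in> up_pt ` blk A K2 h2 a \<and> up_pt v' \<in> up_pt ` blk A K2 h2 a" using assms by blast
  have "up_pt ` blk A K2 h2 a \<in> image up_pt ` blk A K2 h2 ` A" using assms(1) by blast
  then show "up_pt ` blk A K2 h2 a \<in> image down_pt ` blk A K1 h1 ` A \<union> image up_pt ` blk A K2 h2 ` A" by (rule UnI2)
qed

lemma DPr_Pr: "y \<in> A \<Longrightarrow> conn (DPr y) (Pr (h2 y))"
proof -
  assume y: "y \<in> A"
  then have hy: "h2 y \<in> A" using h2 by blast
  have "Und y \<in> blk A K2 h2 (h2 y)" "Pr (h2 y) \<in> blk A K2 h2 (h2 y)"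
    unfolding blk_def using y hy equiv_refl[OF K2] by auto
  then have "pconn (mkP A K1 h1) (mkP A K2 h2) (up_pt (Und y)) (up_pt (Pr (h2 y)))"
    using pconn_up hy by blast
  then show ?thesis by simp
qed

lemma conn_Pr_key: "u \<in> U \<Longrightarrow> conn u (Pr (kk h1 h2 u))"
proof -
  assume "u \<in> U"
  then consider x where "x \<in> A" "u = Und x" | y where "y \<in> A" "u = DPr y" | a where "a \<in> A" "u = Pr a"
    by blast
  then show ?thesis
  proof cases
    case 1
    then have hx: "h1 x \<in> A" using h1 by blast
    have "Und x \<in> blk A K1 h1 (h1 x)" "Pr (h1 x) \<in> blk A K1 h1 (h1 x)"
      unfolding blk_def using 1 hx equiv_refl[OF K1] by auto
    then have "pconn (mkP A K1 h1) (mkP A K2 h2) (down_pt (Und x)) (down_pt (Pr (h1 x)))"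
      using pconn_down hx by blast
    then have "pconn (mkP A K1 h1) (mkP A K2 h2) (Und x) (DPr (h1 x))" by simp
    then show ?thesis using DPr_Pr[OF hx] 1 converse_rtranclp_into_rtranclp by fastforce
  next
    case 2 then show ?thesis using DPr_Pr by simp
  next
    case 3 then show ?thesis by simp
  qed
qed

lemma K3_conn: "(a,b) \<in> K3 \<Longrightarrow> conn (Pr a) (Pr b)"
proof -
  let ?Q = "{(a,b). a \<in> A \<and> b \<in> A \<and> conn (Pr a) (Pr b)}"
  have Q: "equiv A ?Q" unfolding equiv_iff
  proof (intro conjI allI impI ballI)
    show "?Q \<subseteq> A \<times> A" by blast
  next
    fix x assume "x \<in> A" then show "(x,x) \<in> ?Q" by simp
  next
    fix x y assume "(x,y) \<in> ?Q" then show "(y,x) \<in> ?Q" using conn_sym by blast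
  next
    fix x y z assume "(x,y) \<in> ?Q" "(y,z) \<in> ?Q" then show "(x,z) \<in> ?Q"
      using rtranclp_trans[of "pconn (mkP A K1 h1) (mkP A K2 h2)"] by blast
  qed
  have "R3 K1 K2 h2 \<subseteq> ?Q"
  proof
    fix p assume "p \<in> R3 K1 K2 h2"
    then consider "p \<in> K2" | a b where "(a,b) \<in> K1" "p = (h2 a, h2 b)" unfolding R3_def by blast
    then show "p \<in> ?Q"
    proof cases
      case 1
      obtain a b where p: "p = (a,b)" by (cases p)
      have ab: "a \<in> A" "b \<in> A" using equiv_sub[OF K2] 1 p by auto
      have "Pr a \<in> blk A K2 h2 a" "Pr b \<in> blk A K2 h2 a" unfolding blk_def
        using ab 1 p equiv_refl[OF K2] by auto
      then have "pconn (mkP A K1 h1) (mkP A K2 h2) (up_pt (Pr a)) (up_pt (Pr b))"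
        using pconn_up ab by blast
      then show ?thesis using p ab by auto
    next
      case 2
      have ab: "a \<in> A" "b \<in> A" using equiv_sub[OF K1] 2 by auto
      have "Pr a \<in> blk A K1 h1 a" "Pr b \<in> blk A K1 h1 a" unfolding blk_def
        using ab 2 equiv_refl[OF K1] by auto
      then have "pconn (mkP A K1 h1) (mkP A K2 h2) (down_pt (Pr a)) (down_pt (Pr b))"
        using pconn_down ab by blast
      then have s: "pconn (mkP A K1 h1) (mkP A K2 h2) (DPr a) (DPr b)" by simp
      have "conn (Pr (h2 a)) (DPr a)" using conn_sym DPr_Pr ab by blast
      then have "conn (Pr (h2 a)) (DPr b)" using s by (rule rtranclp.rtrancl_into_rtrancl)
      then have "conn (Pr (h2 a)) (Pr (h2 b))" using DPr_Pr[OF ab(2)] rtranclp_trans by metis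
      then show ?thesis using 2 ab h2 by auto
    qed
  qed
  then have "K3 \<subseteq> ?Q" using eqc_min[OF Q] by blast
  then show "(a,b) \<in> K3 \<Longrightarrow> conn (Pr a) (Pr b)" by blast
qed

lemma conn_iff:
  assumes "u \<in> U"
  shows "conn u v \<longleftrightarrow> v \<in> U \<and> (kk h1 h2 u, kk h1 h2 v) \<in> K3"
proof
  assume "conn u v" then show "v \<in> U \<and> (kk h1 h2 u, kk h1 h2 v) \<in> K3" using conn_key assms by blast
next
  assume v: "v \<in> U \<and> (kk h1 h2 u, kk h1 h2 v) \<in> K3"
  have "conn u (Pr (kk h1 h2 u))" using conn_Pr_key assms by blast
  moreover have "conn (Pr (kk h1 h2 u)) (Pr (kk h1 h2 v))" using K3_conn v by blast
  moreover have "conn (Pr (kk h1 h2 v)) v" using conn_Pr_key v conn_sym by blast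
  ultimately show "conn u v" using rtranclp_trans by metis
qed

lemma kk_keyf: "v \<in> base A \<Longrightarrow> kk h1 h2 v = keyf (\<lambda>x\<in>A. h2 (h1 x)) v"
  by (erule base_cases) auto

lemma comp_blk:
  assumes "u \<in> U"
  shows "{v. conn u v} \<inter> base A = blk A K3 (\<lambda>x\<in>A. h2 (h1 x)) (kk h1 h2 u)"
proof -
  have "base A \<subseteq> U" unfolding base_def by blast
  then show ?thesis unfolding blk_def using conn_iff[OF assms] kk_keyf by auto
qed

lemma pmult_mkP: "pmult A (mkP A K1 h1) (mkP A K2 h2) = mkP A K3 (\<lambda>x\<in>A. h2 (h1 x))"
proof -
  let ?h3 = "\<lambda>x\<in>A. h2 (h1 x)"
  have ne: "blk A K3 ?h3 a \<noteq> {}" if "a \<in> A" for a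
  proof -
    have "Pr a \<in> blk A K3 ?h3 a" unfolding blk_def using that equiv_refl[OF K3] by simp
    then show ?thesis by blast
  qed
  have "pmult A (mkP A K1 h1) (mkP A K2 h2) = {blk A K3 ?h3 (kk h1 h2 u) | u. u \<in> U} - {{}}"
  proof -
    have "{C \<inter> base A | C. \<exists>u \<in> U. C = {v. conn u v}} = {blk A K3 ?h3 (kk h1 h2 u) | u. u \<in> U}"
    proof (intro equalityI subsetI)
      fix B assume "B \<in> {C \<inter> base A | C. \<exists>u \<in> U. C = {v. conn u v}}"
      then obtain u where u: "u \<in> U" "B = {v. conn u v} \<inter> base A" by blast
      then have "B = blk A K3 ?h3 (kk h1 h2 u)" using comp_blk by simp
      then show "B \<in> {blk A K3 ?h3 (kk h1 h2 u) | u. u \<in> U}" using u by blast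
    next
      fix B assume "B \<in> {blk A K3 ?h3 (kk h1 h2 u) | u. u \<in> U}"
      then obtain u where u: "u \<in> U" "B = blk A K3 ?h3 (kk h1 h2 u)" by blast
      then have eq: "B = {v. conn u v} \<inter> base A" using comp_blk by simp
      show "B \<in> {C \<inter> base A | C. \<exists>u \<in> U. C = {v. conn u v}}"
        by (rule CollectI, rule exI[where x="{v. conn u v}"], rule conjI, rule eq, rule bexI[OF refl u(1)])
    qed
    then show ?thesis unfolding pmult_def by simp
  qed
  also have "\<dots> = {blk A K3 ?h3 (kk h1 h2 u) | u. u \<in> U}" using ne kk_in by blast
  also have "\<dots> = mkP A K3 ?h3"
  proof (intro equalityI subsetI)
    fix B assume "B \<in> {blk A K3 ?h3 (kk h1 h2 u) | u. u \<in> U}"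
    then show "B \<in> mkP A K3 ?h3" unfolding mkP_def using kk_in by blast
  next
    fix B assume "B \<in> mkP A K3 ?h3"
    then obtain a where a: "a \<in> A" "B = blk A K3 ?h3 a" unfolding mkP_def by blast
    then have u: "Pr a \<in> U" and k: "kk h1 h2 (Pr a) = a" by auto
    have eq: "B = blk A K3 ?h3 (kk h1 h2 (Pr a))" using a(2) k by simp
    show "B \<in> {blk A K3 ?h3 (kk h1 h2 u) | u. u \<in> U}"
      by (rule CollectI, rule exI[where x="Pr a"], rule conjI, rule eq, rule u)
  qed
  finally show ?thesis .
qed

end


context TXE
begin

definition Phi :: "('a \<times> 'a) set \<Rightarrow> ('a \<Rightarrow> 'a) \<Rightarrow> ('a \<Rightarrow> 'a) \<times> ('a \<Rightarrow> 'a)" where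
  "Phi K h = (\<lambda>x\<in>A. eE K (h x), eE K)"

definition phi :: "'a pt set set \<Rightarrow> ('a \<Rightarrow> 'a) \<times> ('a \<Rightarrow> 'a)" where
  "phi \<rho> = Phi (Rrel A \<rho>) (hr A \<rho>)"

lemma eE_eq_iff: "equiv A K \<Longrightarrow> a \<in> A \<Longrightarrow> b \<in> A \<Longrightarrow> eE K a = eE K b \<longleftrightarrow> (a,b) \<in> K"
  using eE(2)[of K] unfolding kerA_def by blast

lemma Phi_cong:
  assumes K: "equiv A K" and h: "h \<in> A \<rightarrow> A" "h' \<in> A \<rightarrow> A" and r: "\<forall>x\<in>A. (h x, h' x) \<in> K"
  shows "Phi K h = Phi K h'"
proof -
  have "\<forall>x\<in>A. eE K (h x) = eE K (h' x)" using r eE_eq_iff[OF K] h by blast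
  then have "(\<lambda>x\<in>A. eE K (h x)) = (\<lambda>x\<in>A. eE K (h' x))" by (intro restrict_ext) blast
  then show ?thesis unfolding Phi_def by simp
qed

lemma phi_mkP:
  assumes K: "equiv A K" and h: "h \<in> A \<rightarrow> A"
  shows "phi (mkP A K h) = Phi K h"
proof -
  let ?\<rho> = "mkP A K h"
  have \<rho>: "?\<rho> \<in> Plt A" by (rule mkP_Plt[OF K h])
  have R: "Rrel A ?\<rho> = K" by (rule Rrel_mkP[OF K h])
  have "\<forall>x\<in>A. (hr A ?\<rho> x, h x) \<in> K"
  proof
    fix x assume x: "x \<in> A"
    have "hr A ?\<rho> x \<in> A" "samebl ?\<rho> (Und x) (Pr (hr A ?\<rho> x))" using hr_prop[OF \<rho> x] by auto
    then have "(h x, hr A ?\<rho> x) \<in> K" using samebl_mkP[OF K h, of "Und x" "Pr (hr A ?\<rho> x)"] x by simp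
    then show "(hr A ?\<rho> x, h x) \<in> K" using equiv_sym[OF K] by blast
  qed
  then show ?thesis unfolding phi_def R using Phi_cong[OF K hr_fun[OF \<rho>] h] by simp
qed

lemma Phi_in:
  assumes K: "equiv A K" and h: "h \<in> A \<rightarrow> A"
  shows "Phi K h \<in> RRest_carrier (TX A) E"
proof -
  have e: "eE K \<in> E" using eE[OF K] by simp
  have eA: "eE K \<in> A \<rightarrow>\<^sub>E A" using E_carrier[OF e] .
  have "eE K \<in> idems (TX A)" using e E_idems by blast
  then have ei: "\<forall>x\<in>A. eE K (eE K x) = eE K x" unfolding idems_TX by blast
  have sA: "(\<lambda>x\<in>A. eE K (h x)) \<in> A \<rightarrow>\<^sub>E A" using eA h by auto
  have "compose A (eE K) (\<lambda>x\<in>A. eE K (h x)) = (\<lambda>x\<in>A. eE K (h x))"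
    unfolding compose_def using ei h by (auto intro!: restrict_ext)
  then show ?thesis unfolding RRest_carrier_def Phi_def using sA e by (simp add: TX_carrier TX_mult)
qed

lemma phi_bij: "bij_betw phi (Plt A) (RRest_carrier (TX A) E)"
  unfolding bij_betw_def
proof (intro conjI)
  show "inj_on phi (Plt A)"
  proof (rule inj_onI)
    fix x y assume x: "x \<in> Plt A" and y: "y \<in> Plt A" and eq: "phi x = phi y"
    have Kx: "equiv A (Rrel A x)" and Ky: "equiv A (Rrel A y)" using Rrel_equiv x y by auto
    have "eE (Rrel A x) = eE (Rrel A y)" using eq unfolding phi_def Phi_def by simp
    then have KK: "Rrel A x = Rrel A y" using eE(2)[OF Kx] eE(2)[OF Ky] by metis
    have f: "(\<lambda>z\<in>A. eE (Rrel A x) (hr A x z)) = (\<lambda>z\<in>A. eE (Rrel A x) (hr A y z))"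
      using eq KK unfolding phi_def Phi_def by simp
    have "\<forall>z\<in>A. (hr A x z, hr A y z) \<in> Rrel A x"
    proof
      fix z assume z: "z \<in> A"
      have "eE (Rrel A x) (hr A x z) = eE (Rrel A x) (hr A y z)" using fun_cong[OF f, of z] z by simp
      then show "(hr A x z, hr A y z) \<in> Rrel A x"
        using eE_eq_iff[OF Kx] hr_fun[OF x] hr_fun[OF y] z by blast
    qed
    then have "mkP A (Rrel A x) (hr A x) = mkP A (Rrel A x) (hr A y)" using mkP_cong[OF Kx] by blast
    then show "x = y" using rho_mkP[OF x] rho_mkP[OF y] KK by simp
  qed
  show "phi ` Plt A = RRest_carrier (TX A) E"
  proof (intro equalityI subsetI)
    fix p assume "p \<in> phi ` Plt A"
    then obtain x where x: "x \<in> Plt A" "p = phi x" by blast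
    then show "p \<in> RRest_carrier (TX A) E"
      unfolding phi_def using Phi_in[OF Rrel_equiv hr_fun] by simp
  next
    fix p assume "p \<in> RRest_carrier (TX A) E"
    then obtain s e where p: "p = (s,e)" "s \<in> A \<rightarrow>\<^sub>E A" "e \<in> E" "compose A e s = s"
      unfolding RRest_carrier_def by (auto simp: TX_carrier TX_mult)
    have K: "equiv A (kerA A e)" by (rule equiv_kerA)
    have sA: "s \<in> A \<rightarrow> A" using p(2) by auto
    have "phi (mkP A (kerA A e) s) = Phi (kerA A e) s" by (rule phi_mkP[OF K sA])
    also have "\<dots> = (\<lambda>x\<in>A. e (s x), e)" unfolding Phi_def eE_ker[OF p(3)] ..
    also have "(\<lambda>x\<in>A. e (s x)) = s" using p(4) unfolding compose_def by simp
    finally have "phi (mkP A (kerA A e) s) = p" using p(1) by simp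
    moreover have "mkP A (kerA A e) s \<in> Plt A" by (rule mkP_Plt[OF K sA])
    ultimately show "p \<in> phi ` Plt A" by blast
  qed
qed

lemma phi_Rop: "x \<in> Plt A \<Longrightarrow> phi (Rop A x) = RRest_R (phi x)"
proof -
  assume x: "x \<in> Plt A"
  let ?K = "Rrel A x"
  have K: "equiv A ?K" by (rule Rrel_equiv[OF x])
  have "Rop A x = mkP A ?K (\<lambda>z\<in>A. z)" by (rule Rop_mkP[OF refl K])
  then have "phi (Rop A x) = Phi ?K (\<lambda>z\<in>A. z)" using phi_mkP[OF K] by auto
  also have "\<dots> = (eE ?K, eE ?K)"
  proof -
    have eA: "eE ?K \<in> A \<rightarrow>\<^sub>E A" using E_carrier eE[OF K] by blast
    have "(\<lambda>z\<in>A. eE ?K ((\<lambda>z\<in>A. z) z)) = eE ?K"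
    proof (rule funcset_ext_eq[OF _ eA])
      show "(\<lambda>z\<in>A. eE ?K ((\<lambda>z\<in>A. z) z)) \<in> A \<rightarrow>\<^sub>E A" using eA by (auto simp: PiE_def Pi_def)
    qed simp
    then show ?thesis unfolding Phi_def by simp
  qed
  finally have eq: "phi (Rop A x) = (eE ?K, eE ?K)" .
  have "RRest_R (phi x) = (eE ?K, eE ?K)" unfolding RRest_R_def phi_def Phi_def by simp
  then show ?thesis using eq by simp
qed

lemma idem_self_ker: "e \<in> E \<Longrightarrow> z \<in> A \<Longrightarrow> (e z, z) \<in> kerA A e"
proof -
  assume "e \<in> E" "z \<in> A"
  moreover then have "e \<in> idems (TX A)" using E_idems by blast
  ultimately show ?thesis by (intro idem_ker)
qed

lemma mult_Phi:
  assumes K1: "equiv A K1" and K2: "equiv A K2" and h1: "h1 \<in> A \<rightarrow> A" and h2: "h2 \<in> A \<rightarrow> A"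
  shows "RRest_mult (TX A) E (Phi K1 h1) (Phi K2 h2) = Phi (eqc A (R3 K1 K2 h2)) (\<lambda>x\<in>A. h2 (h1 x))"
proof -
  let ?K3 = "eqc A (R3 K1 K2 h2)"
  have K3: "equiv A ?K3" by (rule K3[OF K1 K2 h1 h2])
  define e1 where "e1 = eE K1"
  define e2 where "e2 = eE K2"
  define s where "s = (\<lambda>x\<in>A. e1 (h1 x))"
  define t where "t = (\<lambda>x\<in>A. e2 (h2 x))"
  have e1: "e1 \<in> E" "kerA A e1 = K1" using eE[OF K1] e1_def by auto
  have e2: "e2 \<in> E" "kerA A e2 = K2" using eE[OF K2] e2_def by auto
  have e1A: "e1 \<in> A \<rightarrow>\<^sub>E A" and e2A: "e2 \<in> A \<rightarrow>\<^sub>E A" using E_carrier e1 e2 by auto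
  have tA: "t \<in> A \<rightarrow>\<^sub>E A" unfolding t_def using e2A h2 by auto
  have sA: "s \<in> A \<rightarrow>\<^sub>E A" unfolding s_def using e1A h1 by auto
  let ?R' = "{(t (e1 x), t x) | x. x \<in> A}"
  have d: "dot (TX A) E e1 t = dE e1 t" by (rule dot_eq[OF e1(1) tA])
  have dE: "dE e1 t \<in> E" "kerA A (dE e1 t) = eqc A ?R'" using dE_prop[OF e1(1) tA] by auto
  define g where "g = meet (TX A) E (dot (TX A) E e1 t) e2"
  have g: "g \<in> E" "kerA A g = eqc A (eqc A ?R' \<union> K2)"
    using ker_meet[OF dE(1) e2(1)] dE(2) e2(2) d g_def by auto
  have e2K: "(e2 z, z) \<in> K2" if "z \<in> A" for z using idem_self_ker[OF e2(1) that] e2(2) by simp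
  have e1K: "(e1 z, z) \<in> K1" if "z \<in> A" for z using idem_self_ker[OF e1(1) that] e1(2) by simp
  have R'sub: "?R' \<subseteq> A \<times> A" using tA e1A by auto
  have eqR': "equiv A (eqc A ?R')" by (rule eqc_equiv[OF R'sub])
  have Msub: "eqc A ?R' \<union> K2 \<subseteq> A \<times> A" using eqR' K2 unfolding equiv_def by blast
  let ?M = "eqc A (eqc A ?R' \<union> K2)"
  have M: "equiv A ?M" by (rule eqc_equiv[OF Msub])
  have K2M: "(a,b) \<in> K2 \<Longrightarrow> (a,b) \<in> ?M" for a b using eqc_sub[of "eqc A ?R' \<union> K2" A] by blast
  have R'M: "p \<in> ?R' \<Longrightarrow> p \<in> ?M" for p using eqc_sub[of ?R' A] eqc_sub[of "eqc A ?R' \<union> K2" A] by blast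
  have K3eq: "?M = ?K3"
  proof
    show "?M \<subseteq> ?K3"
    proof (rule eqc_min[OF K3])
      have "?R' \<subseteq> ?K3"
      proof
        fix p assume "p \<in> ?R'"
        then obtain x where x: "x \<in> A" "p = (t (e1 x), t x)" by blast
        have ex: "e1 x \<in> A" using e1A x by auto
        have hx: "h2 (e1 x) \<in> A" "h2 x \<in> A" using h2 ex x by auto
        have "(t (e1 x), h2 (e1 x)) \<in> ?K3" using e2K[OF hx(1)] K2_K3[OF K1 K2 h1 h2] ex by (simp add: t_def)
        moreover have "(h2 (e1 x), h2 x) \<in> ?K3" using K1_K3[OF K1 K2 h1 h2] e1K[OF x(1)] by blast
        moreover have "(h2 x, t x) \<in> ?K3" using e2K[OF hx(2)] K2_K3[OF K1 K2 h1 h2] equiv_sym[OF K3] x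
          by (simp add: t_def)
        ultimately show "p \<in> ?K3" using x(2) equiv_trans[OF K3] by blast
      qed
      then have "eqc A ?R' \<subseteq> ?K3" using eqc_le_iff[OF K3] by blast
      then show "eqc A ?R' \<union> K2 \<subseteq> ?K3" using K2_K3[OF K1 K2 h1 h2] by (intro Un_least) auto
    qed
    show "?K3 \<subseteq> ?M"
    proof (rule eqc_min[OF M])
      have key: "(h2 a, h2 (e1 a)) \<in> ?M" if a: "a \<in> A" for a
      proof -
        have ea: "e1 a \<in> A" using e1A a by auto
        have hx: "h2 (e1 a) \<in> A" "h2 a \<in> A" using h2 ea a by auto
        have "(h2 a, t a) \<in> ?M" using K2M e2K[OF hx(2)] equiv_sym[OF K2] a by (simp add: t_def)
        moreover have "(t a, t (e1 a)) \<in> ?M" using R'M[of "(t (e1 a), t a)"] a equiv_sym[OF M] by blast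
        moreover have "(t (e1 a), h2 (e1 a)) \<in> ?M" using K2M e2K[OF hx(1)] ea by (simp add: t_def)
        ultimately show ?thesis using equiv_trans[OF M] by blast
      qed
      show "R3 K1 K2 h2 \<subseteq> ?M"
      proof
        fix p assume "p \<in> R3 K1 K2 h2"
        then consider "p \<in> K2" | a b where "(a,b) \<in> K1" "p = (h2 a, h2 b)" unfolding R3_def by blast
        then show "p \<in> ?M"
        proof cases
          case 1 then show ?thesis using K2M by (cases p) auto
        next
          case 2
          have ab: "a \<in> A" "b \<in> A" using equiv_sub[OF K1] 2 by auto
          have "e1 a = e1 b" using 2 e1(2) unfolding kerA_def by auto
          then have k2: "(h2 (e1 a), h2 b) \<in> ?M" using key[OF ab(2)] equiv_sym[OF M] by simp
          have "(h2 a, h2 b) \<in> ?M" by (rule equiv_trans[OF M key[OF ab(1)] k2])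
          then show ?thesis using 2 by simp
        qed
      qed
    qed
  qed
  have gK: "kerA A g = ?K3" using g(2) K3eq by simp
  have geq: "g = eE ?K3" using E_ker_inj[OF g(1)] eE[OF K3] gK by metis
  have fst_eq: "compose A g (compose A t s) = (\<lambda>x\<in>A. eE ?K3 ((\<lambda>x\<in>A. h2 (h1 x)) x))"
  proof (rule funcset_ext_eq[of _ A A _ A])
    show "compose A g (compose A t s) \<in> A \<rightarrow>\<^sub>E A" by (rule compose_PiE[OF compose_PiE[OF sA tA] E_carrier[OF g(1)]])
    have eA3: "eE ?K3 \<in> A \<rightarrow>\<^sub>E A" by (rule E_carrier[OF eE(1)[OF K3]])
    have "eE ?K3 (h2 (h1 x)) \<in> A" if "x \<in> A" for x
    proof -
      have "h1 x \<in> A" using h1 that by auto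
      then have "h2 (h1 x) \<in> A" using h2 by auto
      then show ?thesis using eA3 by auto
    qed
    then show "(\<lambda>x\<in>A. eE ?K3 ((\<lambda>x\<in>A. h2 (h1 x)) x)) \<in> A \<rightarrow>\<^sub>E A" by auto
    fix x assume x: "x \<in> A"
    have y: "h1 x \<in> A" using h1 x by auto
    have ey: "e1 (h1 x) \<in> A" using e1A y by auto
    have z: "h2 (e1 (h1 x)) \<in> A" "h2 (h1 x) \<in> A" using h2 ey y by auto
    have "(e2 (h2 (e1 (h1 x))), h2 (e1 (h1 x))) \<in> ?K3" using e2K[OF z(1)] K2_K3[OF K1 K2 h1 h2] by blast
    moreover have "(h2 (e1 (h1 x)), h2 (h1 x)) \<in> ?K3" using K1_K3[OF K1 K2 h1 h2] e1K[OF y] by blast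
    ultimately have "(e2 (h2 (e1 (h1 x))), h2 (h1 x)) \<in> ?K3" using equiv_trans[OF K3] by blast
    then have "g (e2 (h2 (e1 (h1 x)))) = g (h2 (h1 x))" using gK unfolding kerA_def by auto
    then show "compose A g (compose A t s) x = (\<lambda>x\<in>A. eE ?K3 ((\<lambda>x\<in>A. h2 (h1 x)) x)) x"
      using x y ey geq by (simp add: compose_def s_def t_def)
  qed
  have "RRest_mult (TX A) E (Phi K1 h1) (Phi K2 h2) = (compose A g (compose A t s), g)"
    unfolding RRest_mult_def Phi_def Let_def g_def s_def t_def e1_def e2_def by (simp add: TX_mult)
  also have "\<dots> = Phi ?K3 (\<lambda>x\<in>A. h2 (h1 x))" unfolding Phi_def using fst_eq geq by simp
  finally show ?thesis .
qed

lemma phi_mult: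
  assumes x: "x \<in> Plt A" and y: "y \<in> Plt A"
  shows "phi (pmult A x y) = RRest_mult (TX A) E (phi x) (phi y)"
proof -
  let ?K1 = "Rrel A x" and ?K2 = "Rrel A y" and ?h1 = "hr A x" and ?h2 = "hr A y"
  have K1: "equiv A ?K1" and K2: "equiv A ?K2" using Rrel_equiv x y by auto
  have h1: "?h1 \<in> A \<rightarrow> A" and h2: "?h2 \<in> A \<rightarrow> A" using hr_fun x y by auto
  have "pmult A x y = pmult A (mkP A ?K1 ?h1) (mkP A ?K2 ?h2)" using rho_mkP[OF x] rho_mkP[OF y] by simp
  also have "\<dots> = mkP A (eqc A (R3 ?K1 ?K2 ?h2)) (\<lambda>z\<in>A. ?h2 (?h1 z))"
    by (rule pmult_mkP[OF K1 K2 h1 h2])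
  moreover have "(\<lambda>z\<in>A. ?h2 (?h1 z)) \<in> A \<rightarrow> A" using h1 h2 by auto
  ultimately have "phi (pmult A x y) = Phi (eqc A (R3 ?K1 ?K2 ?h2)) (\<lambda>z\<in>A. ?h2 (?h1 z))"
    using phi_mkP[OF K3[OF K1 K2 h1 h2]] by simp
  also have "\<dots> = RRest_mult (TX A) E (Phi ?K1 ?h1) (Phi ?K2 ?h2)"
    by (rule mult_Phi[OF K1 K2 h1 h2, symmetric])
  finally show ?thesis unfolding phi_def .
qed

end

theorem theorem7p10:
  fixes A :: "'a set"
  assumes "A \<noteq> {}"
  shows "right_protomodal (TX A) \<and>
    (\<forall>E. max_left_pre_reduced (TX A) E \<longrightarrow>
       inductive_right_E_monoid (TX A) E \<and>
       (\<exists>\<phi>. bij_betw \<phi> (Plt A) (RRest_carrier (TX A) E) \<and>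
            (\<forall>x\<in>Plt A. \<forall>y\<in>Plt A.
               \<phi> (pmult A x y) = RRest_mult (TX A) E (\<phi> x) (\<phi> y)) \<and>
            (\<forall>x\<in>Plt A. \<phi> (Rop A x) = RRest_R (\<phi> x))))"
proof (intro conjI allI impI)
  show "right_protomodal (TX A)" by (rule protomodal)
  fix E assume E: "max_left_pre_reduced (TX A) E"
  interpret T: TXE A E by standard (rule E)
  show "inductive_right_E_monoid (TX A) E" by (rule T.TX_inductive)
  show "\<exists>\<phi>. bij_betw \<phi> (Plt A) (RRest_carrier (TX A) E) \<and>
            (\<forall>x\<in>Plt A. \<forall>y\<in>Plt A.
               \<phi> (pmult A x y) = RRest_mult (TX A) E (\<phi> x) (\<phi> y)) \<and>
            (\<forall>x\<in>Plt A. \<phi> (Rop A x) = RRest_R (\<phi> x))"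
    using T.phi_bij T.phi_mult T.phi_Rop by blast
qed

end
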